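(* For an auto-regressive generative model producing its output over $R$ rounds with per-round models $h_1,\dots,h_R$, the cumulative error satisfies \[ L(h_R) := \sum_{r=1}^{R}\lambda_r L_{r}(h_{r}) \leq \sum_{i=1}^R \Lambda_i \left( \hat{L}_{m,i}(h_{i}) + \epsilon_i \right), \] where $G_{r,i}=\lambda_r\prod_{j=i+1}^{r}\gamma_j$ and $\Lambda_i=\sum_{r=i}^{R}G_{r,i}$.
   Context: For round $r$, $L_r(h_r)=\mathbb{E}_{(x^{(r)},y^{(r)})\sim\mathcal{D}^{(r)}}[\ell(h_r(x^{(r)}),y^{(r)})]$ is the expected loss of the round-$r$ output with respect to the expected output, $\hat{L}_{m,r}(h_r)$ is the empirical loss computed on $m$ samples, and $\epsilon_r\ge0$ is the generalization term of round $r$. The constants $\gamma_r\ge 0$ quantify the impact of errors from round $r-1$ on round $r$, in the sense that $L_r(h_r)\le \hat{L}_{m,r}(h_r)+\epsilon_r+\gamma_r L_{r-1}(h_{r-1})$ for each $r$ (with no previous-round term for $r=1$). The weights $\lambda_r\ge 0$ satisfy $\sum_{r=1}^R\lambda_r=1$. Empty products equal $1$. *)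

theory Defs
  imports "HOL-Analysis.Analysis"
begin

end

theory Submission
  imports Defs
begin

lemma swap_tri:
  fixes f :: "nat \<Rightarrow> nat \<Rightarrow> real"
  shows "(\<Sum>r=1..R. \<Sum>i=1..r. f r i) = (\<Sum>i=1..R. \<Sum>r=i..R. f r i)"
proof (induction R)
  case 0
  then show ?case by simp
next
  case (Suc R)
  have "(\<Sum>i=1..Suc R. \<Sum>r=i..Suc R. f r i)
      = (\<Sum>i=1..R. \<Sum>r=i..Suc R. f r i) + f (Suc R) (Suc R)" by simp
  also have "(\<Sum>i=1..R. \<Sum>r=i..Suc R. f r i) = (\<Sum>i=1..R. (\<Sum>r=i..R. f r i) + f (Suc R) i)"
    by (rule sum.cong) auto
  also have "\<dots> = (\<Sum>i=1..R. \<Sum>r=i..R. f r i) + (\<Sum>i=1..R. f (Suc R) i)"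
    by (simp add: sum.distrib)
  finally show ?case using Suc by simp
qed

theorem theorem6p2:
  fixes R :: nat
    and h :: "nat \<Rightarrow> 'h"
    and L :: "nat \<Rightarrow> 'h \<Rightarrow> real"
    and Lhat :: "nat \<Rightarrow> 'h \<Rightarrow> real"
    and eps gam lam :: "nat \<Rightarrow> real"
  assumes eps_nonneg: "\<And>r. 1 \<le> r \<Longrightarrow> r \<le> R \<Longrightarrow> eps r \<ge> 0"
    and gamma_nonneg: "\<And>r. 1 \<le> r \<Longrightarrow> r \<le> R \<Longrightarrow> gam r \<ge> 0"
    and lambda_nonneg: "\<And>r. 1 \<le> r \<Longrightarrow> r \<le> R \<Longrightarrow> lam r \<ge> 0"
    and lambda_sum: "(\<Sum>r=1..R. lam r) = 1"
    and first_round: "1 \<le> R \<Longrightarrow> L 1 (h 1) \<le> Lhat 1 (h 1) + eps 1"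
    and later_rounds: "\<And>r. 2 \<le> r \<Longrightarrow> r \<le> R \<Longrightarrow>
        L r (h r) \<le> Lhat r (h r) + eps r + gam r * L (r - 1) (h (r - 1))"
  shows "(\<Sum>r=1..R. lam r * L r (h r))
         \<le> (\<Sum>i=1..R. (\<Sum>r=i..R. lam r * (\<Prod>j=i+1..r. gam j)) * (Lhat i (h i) + eps i))"
proof -
  define a where "a i = Lhat i (h i) + eps i" for i
  have key: "L r (h r) \<le> (\<Sum>i=1..r. (\<Prod>j=i+1..r. gam j) * a i)" if "1 \<le> r" "r \<le> R" for r
    using that
  proof (induction r)
    case 0
    then show ?case by simp
  next
    case (Suc r)
    show ?case
    proof (cases "r = 0")
      case True
      then show ?thesis using first_round Suc.prems by (simp add: a_def)
    next
      case False
      have IH: "L r (h r) \<le> (\<Sum>i=1..r. (\<Prod>j=i+1..r. gam j) * a i)"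
        using Suc False by simp
      have g: "gam (Suc r) \<ge> 0" using gamma_nonneg Suc.prems by simp
      have "L (Suc r) (h (Suc r)) \<le> a (Suc r) + gam (Suc r) * L r (h r)"
        using later_rounds[of "Suc r"] Suc.prems False by (simp add: a_def)
      also have "\<dots> \<le> a (Suc r) + gam (Suc r) * (\<Sum>i=1..r. (\<Prod>j=i+1..r. gam j) * a i)"
        using IH g by (simp add: mult_left_mono)
      also have "gam (Suc r) * (\<Sum>i=1..r. (\<Prod>j=i+1..r. gam j) * a i)
          = (\<Sum>i=1..r. (\<Prod>j=i+1..Suc r. gam j) * a i)"
        unfolding sum_distrib_left
        by (rule sum.cong) (auto simp: prod.nat_ivl_Suc')
      finally show ?thesis by simp
    qed
  qed
  have "(\<Sum>r=1..R. lam r * L r (h r))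
      \<le> (\<Sum>r=1..R. lam r * (\<Sum>i=1..r. (\<Prod>j=i+1..r. gam j) * a i))"
    by (rule sum_mono) (metis atLeastAtMost_iff key lambda_nonneg mult_left_mono)
  also have "\<dots> = (\<Sum>r=1..R. \<Sum>i=1..r. lam r * (\<Prod>j=i+1..r. gam j) * a i)"
    by (simp add: sum_distrib_left mult.assoc)
  also have "\<dots> = (\<Sum>i=1..R. \<Sum>r=i..R. lam r * (\<Prod>j=i+1..r. gam j) * a i)"
    by (rule swap_tri)
  also have "\<dots> = (\<Sum>i=1..R. (\<Sum>r=i..R. lam r * (\<Prod>j=i+1..r. gam j)) * a i)"
    by (simp add: sum_distrib_right)
  finally show ?thesis by (simp add: a_def)
qed

end
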